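(* Let $A$ be a centrally essential ring such that the factor ring $A/J(A)$ is commutative, where $J(A)$ is the Jacobson radical. Then every minimal right ideal $S$ of $A$ is contained in the center $Z(A)$. In particular, every minimal right ideal of $A$ is a two-sided ideal, and the right socle $\mathrm{Soc}\,A_A$ is contained in $Z(A)$.
   Context: All rings are associative, unital and non-zero. $Z(A)$ denotes the center of a ring $A$. A ring $A$ is centrally essential if either $A$ is commutative or for every non-central element $a\in A$ there exist non-zero central elements $x,y\in Z(A)$ with $ax=y$. *)

theory Defs
  imports Main
begin

definition center :: "'a::ring_1 set" where
  "center = {z. \<forall>a. z * a = a * z}"

definition centrally_essential :: "'a::ring_1 itself \<Rightarrow> bool" where
  "centrally_essential _ \<longleftrightarrow>
     (\<forall>a b :: 'a. a * b = b * a) \<or>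
     (\<forall>a :: 'a. a \<notin> center \<longrightarrow>
        (\<exists>x\<in>center. \<exists>y\<in>center. x \<noteq> 0 \<and> y \<noteq> 0 \<and> a * x = y))"

definition right_ideal :: "'a::ring_1 set \<Rightarrow> bool" where
  "right_ideal I \<longleftrightarrow> 0 \<in> I \<and> (\<forall>x\<in>I. \<forall>y\<in>I. x + y \<in> I) \<and> (\<forall>x\<in>I. - x \<in> I)
     \<and> (\<forall>x\<in>I. \<forall>a. x * a \<in> I)"

definition two_sided_ideal :: "'a::ring_1 set \<Rightarrow> bool" where
  "two_sided_ideal I \<longleftrightarrow> right_ideal I \<and> (\<forall>x\<in>I. \<forall>a. a * x \<in> I)"

definition maximal_right_ideal :: "'a::ring_1 set \<Rightarrow> bool" where
  "maximal_right_ideal I \<longleftrightarrow> right_ideal I \<and> I \<noteq> UNIV \<and>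
     (\<forall>K. right_ideal K \<and> I \<subseteq> K \<longrightarrow> K = I \<or> K = UNIV)"

definition minimal_right_ideal :: "'a::ring_1 set \<Rightarrow> bool" where
  "minimal_right_ideal S \<longleftrightarrow> right_ideal S \<and> S \<noteq> {0} \<and>
     (\<forall>K. right_ideal K \<and> K \<subseteq> S \<longrightarrow> K = {0} \<or> K = S)"

definition jacobson :: "'a::ring_1 set" where
  "jacobson = \<Inter>{I. maximal_right_ideal I}"

text \<open>A/J(A) is commutative: all commutators lie in J(A).\<close>
definition comm_mod_jacobson :: "'a::ring_1 itself \<Rightarrow> bool" where
  "comm_mod_jacobson _ \<longleftrightarrow> (\<forall>x y :: 'a. x * y - y * x \<in> jacobson)"

text \<open>Right socle: sum of all minimal right ideals (additive subgroup generated by their union).\<close>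
inductive_set right_socle :: "'a::ring_1 set" where
  zero: "0 \<in> right_socle"
| gen: "minimal_right_ideal S \<Longrightarrow> x \<in> S \<Longrightarrow> x \<in> right_socle"
| add: "x \<in> right_socle \<Longrightarrow> y \<in> right_socle \<Longrightarrow> x + y \<in> right_socle"
| neg: "x \<in> right_socle \<Longrightarrow> - x \<in> right_socle"

end

theory Submission
  imports Defs
begin

lemma img_right_ideal:
  fixes s :: "'a::ring_1"
  assumes "right_ideal K"
  shows "right_ideal {s * k | k. k \<in> K}"
  using assms unfolding right_ideal_def
proof (intro conjI ballI allI)
  assume K: "0 \<in> K \<and> (\<forall>x\<in>K. \<forall>y\<in>K. x + y \<in> K) \<and> (\<forall>x\<in>K. - x \<in> K) \<and> (\<forall>x\<in>K. \<forall>a. x * a \<in> K)"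
  show "0 \<in> {s * k | k. k \<in> K}" using K by (metis (mono_tags, lifting) mem_Collect_eq mult_zero_right)
  fix x assume "x \<in> {s * k | k. k \<in> K}"
  then obtain k where k: "x = s * k" "k \<in> K" by blast
  show "- x \<in> {s * k | k. k \<in> K}"
  proof -
    have "- x = s * (- k)" using k by simp
    thus ?thesis using K k by blast
  qed
  { fix a show "x * a \<in> {s * k | k. k \<in> K}"
    proof -
      have "x * a = s * (k * a)" using k by (simp add: mult.assoc)
      thus ?thesis using K k by blast
    qed }
  { fix y assume "y \<in> {s * k | k. k \<in> K}"
    then obtain l where l: "y = s * l" "l \<in> K" by blast
    have "x + y = s * (k + l)" using k l by (simp add: distrib_left)
    thus "x + y \<in> {s * k | k. k \<in> K}" using K k l by blast }
qed

lemma img_sub: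
  fixes s :: "'a::ring_1"
  assumes "right_ideal S" "s \<in> S"
  shows "{s * k | k. k \<in> K} \<subseteq> S"
  using assms unfolding right_ideal_def by blast

lemma ann_max:
  fixes s :: "'a::ring_1"
  assumes S: "minimal_right_ideal S" and s: "s \<in> S" "s \<noteq> 0"
  shows "maximal_right_ideal {a. s * a = 0}"
proof -
  have RS: "right_ideal S" using S unfolding minimal_right_ideal_def by blast
  have ri: "right_ideal {a. s * a = 0}"
    unfolding right_ideal_def by (simp add: distrib_left mult.assoc[symmetric])
  have "s * 1 \<noteq> 0" using s by simp
  hence nu: "{a. s * a = 0} \<noteq> UNIV" by blast
  have "K = {a. s * a = 0} \<or> K = UNIV" if K: "right_ideal K" "{a. s * a = 0} \<subseteq> K" for K
  proof -
    let ?T = "{s * k | k. k \<in> K}"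
    have "right_ideal ?T" using img_right_ideal K(1) by blast
    moreover have "?T \<subseteq> S" using img_sub RS s(1) by blast
    ultimately have "?T = {0} \<or> ?T = S" using S unfolding minimal_right_ideal_def by blast
    then show ?thesis
    proof
      assume "?T = {0}"
      hence "K \<subseteq> {a. s * a = 0}" by blast
      thus ?thesis using K by blast
    next
      assume "?T = S"
      then obtain k where k: "k \<in> K" "s = s * k" using s by blast
      have "s * (1 - k) = 0" using k by (simp add: right_diff_distrib)
      hence "1 - k \<in> K" using K by blast
      hence "(1 - k) + k \<in> K" using k K(1) unfolding right_ideal_def by blast
      hence "1 \<in> K" by simp
      hence "\<forall>a. 1 * a \<in> K" using K(1) unfolding right_ideal_def by blast
      hence "\<forall>a. a \<in> K" by simp
      thus ?thesis by blast
    qed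
  qed
  thus ?thesis using ri nu unfolding maximal_right_ideal_def by blast
qed

lemma ann_comm:
  fixes s :: "'a::ring_1"
  assumes S: "minimal_right_ideal S" and s: "s \<in> S"
    and cj: "comm_mod_jacobson TYPE('a)"
  shows "s * (x * y - y * x) = 0"
proof (cases "s = 0")
  case True thus ?thesis by simp
next
  case False
  have "maximal_right_ideal {a. s * a = 0}" using ann_max S s False by blast
  hence "jacobson \<subseteq> {a. s * a = 0}" unfolding jacobson_def by blast
  moreover have "x * y - y * x \<in> jacobson" using cj unfolding comm_mod_jacobson_def by blast
  ultimately show ?thesis by blast
qed

lemma min_central:
  fixes S :: "'a::ring_1 set"
  assumes ce: "centrally_essential TYPE('a)" and cj: "comm_mod_jacobson TYPE('a)"
    and S: "minimal_right_ideal S" and s: "s \<in> S"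
  shows "s \<in> center"
proof (rule ccontr)
  assume nc: "s \<notin> center"
  have RS: "right_ideal S" using S unfolding minimal_right_ideal_def by blast
  have "\<not> (\<forall>a b :: 'a. a * b = b * a)" using nc unfolding center_def by blast
  hence "\<exists>x\<in>center. \<exists>y\<in>center. x \<noteq> 0 \<and> y \<noteq> 0 \<and> s * x = y"
    using ce nc unfolding centrally_essential_def by blast
  then obtain x y where xy: "x \<in> center" "y \<in> center" "y \<noteq> 0" "s * x = y"
    by blast
  have yS: "y \<in> S" using RS s xy(4) unfolding right_ideal_def by blast
  let ?T = "{y * k | k. k \<in> (UNIV :: 'a set)}"
  have "right_ideal (UNIV :: 'a set)" unfolding right_ideal_def by blast
  hence "right_ideal ?T" using img_right_ideal by blast
  moreover have "?T \<subseteq> S" using img_sub RS yS by blast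
  ultimately have "?T = {0} \<or> ?T = S" using S unfolding minimal_right_ideal_def by blast
  moreover have "y = y * 1" by simp
  hence "y \<in> ?T" by blast
  ultimately have "?T = S" using xy(3) by blast
  then obtain a where a: "s = y * a" using s by blast
  have "s * b = b * s" for b
  proof -
    have "y * (a * b - b * a) = 0" using ann_comm[OF S yS cj] by blast
    hence "y * a * b = y * b * a" by (simp add: right_diff_distrib mult.assoc)
    moreover have "y * b = b * y" using xy(2) unfolding center_def by blast
    ultimately show ?thesis using a by (simp add: mult.assoc)
  qed
  thus False using nc unfolding center_def by blast
qed

theorem mainTheorem3:
  assumes "centrally_essential TYPE('a::ring_1)"
    and "comm_mod_jacobson TYPE('a)"
  shows "(\<forall>S :: 'a set. minimal_right_ideal S \<longrightarrow> S \<subseteq> center \<and> two_sided_ideal S)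
         \<and> (right_socle :: 'a set) \<subseteq> center"
proof
  have sub: "S \<subseteq> center" if "minimal_right_ideal S" for S :: "'a set"
    using min_central[OF assms that] by blast
  show "\<forall>S :: 'a set. minimal_right_ideal S \<longrightarrow> S \<subseteq> center \<and> two_sided_ideal S"
  proof (intro allI impI conjI)
    fix S :: "'a set" assume m: "minimal_right_ideal S"
    show "S \<subseteq> center" using sub m .
    have RS: "right_ideal S" using m unfolding minimal_right_ideal_def by blast
    show "two_sided_ideal S" unfolding two_sided_ideal_def
    proof (intro conjI ballI allI)
      show "right_ideal S" by (rule RS)
      fix x a assume "x \<in> S"
      hence "x * a \<in> S" "x \<in> center" using RS sub m unfolding right_ideal_def by blast+
      thus "a * x \<in> S" unfolding center_def by auto
    qed
  qed
  show "(right_socle :: 'a set) \<subseteq> center"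
  proof
    fix x :: 'a assume "x \<in> right_socle"
    thus "x \<in> center"
    proof induction
      case zero thus ?case unfolding center_def by simp
    next
      case (gen S x) thus ?case using sub by blast
    next
      case (add x y) thus ?case unfolding center_def by (simp add: distrib_left distrib_right)
    next
      case (neg x) thus ?case unfolding center_def by simp
    qed
  qed
qed

end
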